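(* Let $\mathcal{A}\in\mathbb{R}^{n_1\times\cdots\times n_d}$ ($d\ge 2$) and $p\in\{1,\dots,d\}$, and let $\mathcal{G}^{(1)},\dots,\mathcal{G}^{(d)}$ be the cores output by the sparse TT conversion procedure described below applied to $(\mathcal{A},p)$. Then $\mathbf{L}(\mathcal{G}^{(k)})$ has orthonormal columns for every $k<p$, and $\mathbf{R}(\mathcal{G}^{(k)})^T$ has orthonormal columns for every $k>p$.
   Context: TT format: cores $\mathcal{G}^{(k)}\in\mathbb{R}^{r_{k-1}\times n_k\times r_k}$, $r_0=r_d=1$, represent the tensor with entries $\mathcal{G}^{(1)}(:,i_1,:)\cdots\mathcal{G}^{(d)}(:,i_d,:)$. For a core $\mathcal{G}\in\mathbb{R}^{a\times n\times b}$: $\mathbf{L}(\mathcal{G})\in\mathbb{R}^{an\times b}$, $\mathbf{L}(\mathcal{G})_{(i-1)n+j,\,l}=\mathcal{G}(i,j,l)$; $\mathbf{R}(\mathcal{G})\in\mathbb{R}^{a\times nb}$, $\mathbf{R}(\mathcal{G})_{i,\,(j-1)b+l}=\mathcal{G}(i,j,l)$. A $p$-fiber of $\mathcal{A}$ is a vector $\mathcal{A}(i_1,\dots,i_{p-1},:,i_{p+1},\dots,i_d)\in\mathbb{R}^{n_p}$. $\operatorname{Depar}$: given $\mathbf{M}\in\mathbb{R}^{a\times b}$, process columns $j=1,\dots,b$ in order, keeping an ordered list $K$ of kept columns: if $\mathbf{M}_{:,j}=cK_i$ for some kept $K_i$ and scalar $c$ (first such $i$), set $T_{i,j}=c$; otherwise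 append $\mathbf{M}_{:,j}$ to $K$ and set $T_{|K|,j}=1$; other entries of $\mathbf{T}$ are zero. Output $\mathbf{N}=[K_1\cdots K_\beta]$, $\mathbf{T}\in\mathbb{R}^{\beta\times b}$. Sparse TT conversion procedure on $(\mathcal{A},p)$: enumerate the nonzero $p$-fibers as $j=1,\dots,R$, the $j$-th having fixed indices $(i^{(j)}_1,\dots,i^{(j)}_{p-1},i^{(j)}_{p+1},\dots,i^{(j)}_d)$ and value $\mathbf{v}_j\in\mathbb{R}^{n_p}$. Initialize a TT with ranks $r_0=r_d=1$, $r_k=R$ otherwise: for $k\neq p$, $\mathcal{G}^{(k)}(a,i,b)=1$ if $i=i^{(j)}_k$, where $j=b$ if $k=1$, $j=a$ if $k=d$, and $a=b=j$ is required if $1<k<d$; all other entries $0$. For $k=p$, $\mathcal{G}^{(p)}(a,i,b)=\mathbf{v}_j(i)$ with $j$ determined by the same rule, other entries $0$. Then set $\tilde r_0=1$; for $k=1,\dots,p-1$: $(\mathbf{N},\mathbf{T})=\operatorname{Depar}(\mathbf{L}(\mathcal{G}^{(k)}))$, $\mathbf{N}\in\mathbb{R}^{\tilde r_{k-1}n_k\times\tilde r_k}$; replace $\mathcal{G}^{(k)}$ by the core whose $\mathbf{L}$-unfolding is $\mathbf{N}$; replace each slice $\mathcal{G}^{(k+1)}(:,i,:)$ by $\mathbf{T}\mathcal{G}^{(k+1)}(:,i,:)$. Then set $\tilde r_d=1$; for $k=d,\dots,p+1$: $(\mathbf{N},\mathbf{T})=\operatorname{Depar}(\mathbf{R}(\mathcal{G}^{(k)})^T)$,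 $\mathbf{N}\in\mathbb{R}^{n_k\tilde r_k\times\tilde r_{k-1}}$; replace $\mathcal{G}^{(k)}$ by the core whose $\mathbf{R}$-unfolding is $\mathbf{N}^T$; replace each slice $\mathcal{G}^{(k-1)}(:,i,:)$ by $\mathcal{G}^{(k-1)}(:,i,:)\mathbf{T}^T$. Output the resulting cores. *)

theory Defs
  imports "Jordan_Normal_Form.Matrix"
begin

text \<open>Conventions: all indices are 0-based. A tensor of size n_1 x ... x n_d is
  given by its list of mode sizes ns (length d) and an entry function
  A :: nat list => real, evaluated on index lists xs with length xs = d and
  xs!k < ns!k. The paper's mode p (1-based) is p+1 here.
  A TT core G in R^(a x n x b) is a tuple (a, n, b, f) with G(x,i,y) = f x i y.\<close>

type_synonym core = "nat \<times> nat \<times> nat \<times> (nat \<Rightarrow> nat \<Rightarrow> nat \<Rightarrow> real)"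

fun core_L :: "core \<Rightarrow> real mat" where
  "core_L (a, n, b, f) = mat (a * n) b (\<lambda>(r, l). f (r div n) (r mod n) l)"

fun core_R :: "core \<Rightarrow> real mat" where
  "core_R (a, n, b, f) = mat a (n * b) (\<lambda>(x, c). f x (c div b) (c mod b))"

fun core_slice :: "core \<Rightarrow> nat \<Rightarrow> real mat" where
  "core_slice (a, n, b, f) i = mat a b (\<lambda>(x, y). f x i y)"

definition core_of_L :: "nat \<Rightarrow> nat \<Rightarrow> real mat \<Rightarrow> core" where
  "core_of_L a n N = (a, n, dim_col N, \<lambda>x i y. N $$ (x * n + i, y))"

definition core_of_R :: "nat \<Rightarrow> nat \<Rightarrow> real mat \<Rightarrow> core" where
  "core_of_R n b M = (dim_row M, n, b, \<lambda>x i y. M $$ (x, i * b + y))"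

fun core_lmult :: "real mat \<Rightarrow> core \<Rightarrow> core" where
  "core_lmult T (a, n, b, f) =
     (dim_row T, n, b, \<lambda>x i y. (T * core_slice (a, n, b, f) i) $$ (x, y))"

fun core_rmult :: "core \<Rightarrow> real mat \<Rightarrow> core" where
  "core_rmult (a, n, b, f) S =
     (a, n, dim_col S, \<lambda>x i y. (core_slice (a, n, b, f) i * S) $$ (x, y))"

fun depar_cols :: "real vec list \<Rightarrow> real vec list \<Rightarrow> real vec list \<times> (nat \<times> real) list" where
  "depar_cols K [] = (K, [])"
| "depar_cols K (v # vs) =
     (case find (\<lambda>i. \<exists>c. v = c \<cdot>\<^sub>v (K ! i)) [0..<length K] of
        Some i \<Rightarrow> (let (K', as) = depar_cols K vs
                   in (K', (i, SOME c. v = c \<cdot>\<^sub>v (K ! i)) # as))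
      | None \<Rightarrow> (let (K', as) = depar_cols (K @ [v]) vs
                 in (K', (length K, 1) # as)))"

definition depar :: "real mat \<Rightarrow> real mat \<times> real mat" where
  "depar M = (let (K, as) = depar_cols [] (cols M) in
     (mat_of_cols (dim_row M) K,
      mat (length K) (dim_col M) (\<lambda>(i, j). if fst (as ! j) = i then snd (as ! j) else 0)))"

text \<open>Enumeration of nonzero p-fibers: each entry is a full index list whose p-th
  entry is a placeholder 0; the list is duplicate-free and lists exactly the
  fixed-index tuples whose fiber is nonzero.\<close>
definition nonzero_fiber_enum ::
  "nat list \<Rightarrow> (nat list \<Rightarrow> real) \<Rightarrow> nat \<Rightarrow> nat list list \<Rightarrow> bool" where
  "nonzero_fiber_enum ns A p fs \<longleftrightarrow> distinct fs \<and>
     set fs = {xs. length xs = length ns \<and> xs ! p = 0 \<and>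
                   (\<forall>k<length ns. k \<noteq> p \<longrightarrow> xs ! k < ns ! k) \<and>
                   (\<exists>i<ns ! p. A (xs[p := i]) \<noteq> 0)}"

definition init_core :: "nat list \<Rightarrow> (nat list \<Rightarrow> real) \<Rightarrow> nat \<Rightarrow> nat list list \<Rightarrow> nat \<Rightarrow> core" where
  "init_core ns A p fs k =
    (let d = length ns; R = length fs;
         ra = (if k = 0 then 1 else R);
         rb = (if k = d - 1 then 1 else R);
         val = (\<lambda>j i. if k = p then A ((fs ! j)[p := i])
                       else (if i = fs ! j ! k then 1 else 0))
     in (ra, ns ! k, rb, \<lambda>a i b.
           if a < ra \<and> i < ns ! k \<and> b < rb then
             (if k = 0 then val b i
              else if k = d - 1 then val a i
              else if a = b then val a i else 0)
           else 0))"

definition left_step :: "nat \<Rightarrow> core list \<Rightarrow> core list" where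
  "left_step k Gs =
    (case Gs ! k of (a, n, b, f) \<Rightarrow>
      (let (N, T) = depar (core_L (Gs ! k))
       in Gs[k := core_of_L a n N, Suc k := core_lmult T (Gs ! Suc k)]))"

definition right_step :: "nat \<Rightarrow> core list \<Rightarrow> core list" where
  "right_step k Gs =
    (case Gs ! k of (a, n, b, f) \<Rightarrow>
      (let (N, T) = depar (transpose_mat (core_R (Gs ! k)))
       in Gs[k := core_of_R n b (transpose_mat N),
             k - 1 := core_rmult (Gs ! (k - 1)) (transpose_mat T)]))"

definition sparse_tt :: "nat list \<Rightarrow> (nat list \<Rightarrow> real) \<Rightarrow> nat \<Rightarrow> nat list list \<Rightarrow> core list" where
  "sparse_tt ns A p fs =
    fold right_step (rev [Suc p..<length ns])
      (fold left_step [0..<p] (map (init_core ns A p fs) [0..<length ns]))"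

definition orthonormal_cols :: "real mat \<Rightarrow> bool" where
  "orthonormal_cols M \<longleftrightarrow>
     (\<forall>i<dim_col M. \<forall>j<dim_col M. col M i \<bullet> col M j = (if i = j then 1 else 0))"

end

theory Submission
  imports Defs
begin

definition isunit :: "nat \<Rightarrow> real vec \<Rightarrow> bool" where
  "isunit m v \<longleftrightarrow> (\<exists>j<m. v = unit_vec m j)"

lemma unit_mult_eq:
  assumes "a < m" "b < m" "unit_vec m a = c \<cdot>\<^sub>v (unit_vec m b :: real vec)"
  shows "a = b \<and> c = 1"
proof -
  have "unit_vec m a $ a = (c \<cdot>\<^sub>v (unit_vec m b :: real vec)) $ a" using assms by simp
  then have "1 = c * (if a = b then 1 else 0)" using assms(1,2) by simp
  then show ?thesis by (cases "a = b") auto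
qed

lemma depar_cols_prop:
  "(\<forall>v\<in>set K. isunit m v) \<Longrightarrow> distinct K \<Longrightarrow> (\<forall>v\<in>set vs. isunit m v) \<Longrightarrow>
   depar_cols K vs = (K', as) \<Longrightarrow>
   (\<forall>v\<in>set K'. isunit m v) \<and> distinct K' \<and> length K \<le> length K' \<and> length as = length vs \<and>
   (\<forall>l<length vs. fst (as!l) < length K' \<and> snd (as!l) = 1)"
proof (induction K vs arbitrary: K' as rule: depar_cols.induct)
  case (1 K)
  then show ?case by auto
next
  case (2 K v vs)
  show ?case
  proof (cases "find (\<lambda>i. \<exists>c. v = c \<cdot>\<^sub>v (K ! i)) [0..<length K]")
    case None
    obtain K2 as2 where r: "depar_cols (K @ [v]) vs = (K2, as2)" by fastforce
    with None 2(6) have e: "K' = K2" "as = (length K, 1) # as2" by auto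
    have nin: "v \<notin> set K"
    proof
      assume "v \<in> set K"
      then obtain i where "i < length K" "K ! i = v" by (auto simp: in_set_conv_nth)
      then have "\<exists>x. x \<in> set [0..<length K] \<and> (\<exists>c. v = c \<cdot>\<^sub>v (K ! x))"
        by (intro exI[of _ i]) (auto intro: exI[of _ 1])
      with None show False unfolding find_None_iff by blast
    qed
    have IH: "(\<forall>v\<in>set K2. isunit m v) \<and> distinct K2 \<and> length (K@[v]) \<le> length K2 \<and> length as2 = length vs \<and>
      (\<forall>l<length vs. fst (as2!l) < length K2 \<and> snd (as2!l) = 1)"
      using 2(1)[OF None] 2(3-5) nin r by auto
    show ?thesis unfolding e using IH
      by (auto simp: nth_Cons split: nat.splits)
  next
    case (Some i)
    obtain K2 as2 where r: "depar_cols K vs = (K2, as2)" by fastforce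
    with Some 2(6) have e: "K' = K2" "as = (i, SOME c. v = c \<cdot>\<^sub>v (K ! i)) # as2" by auto
    from Some have i: "i < length K" and ex: "\<exists>c. v = c \<cdot>\<^sub>v (K ! i)"
      by (auto simp: find_Some_iff)
    have s1: "(SOME c. v = c \<cdot>\<^sub>v (K ! i)) = 1"
    proof -
      have h: "v = (SOME c. v = c \<cdot>\<^sub>v (K ! i)) \<cdot>\<^sub>v (K ! i)" using someI_ex[OF ex] .
      from 2(5) obtain a where a: "a < m" "v = unit_vec m a" unfolding isunit_def by auto
      from 2(3) i obtain b where b: "b < m" "K ! i = unit_vec m b" unfolding isunit_def using nth_mem by blast
      show ?thesis using unit_mult_eq[OF a(1) b(1)] h a b by auto
    qed
    have IH: "(\<forall>v\<in>set K2. isunit m v) \<and> distinct K2 \<and> length K \<le> length K2 \<and> length as2 = length vs \<and>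
      (\<forall>l<length vs. fst (as2!l) < length K2 \<and> snd (as2!l) = 1)"
      using 2(2)[OF Some] 2(3-5) r by auto
    show ?thesis unfolding e s1 using IH i
      by (auto simp: nth_Cons split: nat.splits)
  qed
qed

definition unitcols :: "real mat \<Rightarrow> bool" where
  "unitcols M \<longleftrightarrow> (\<forall>l<dim_col M. isunit (dim_row M) (col M l))"

lemma depar_prop:
  assumes "unitcols M" "depar M = (N, T)"
  shows "orthonormal_cols N \<and> dim_row N = dim_row M \<and> dim_row T = dim_col N \<and> dim_col T = dim_col M \<and>
    (\<forall>l<dim_col M. \<exists>g<dim_row T. \<forall>x<dim_row T. T $$ (x, l) = (if x = g then 1 else 0))"
proof -
  obtain K as where r: "depar_cols [] (cols M) = (K, as)" by fastforce
  have cu: "\<forall>v\<in>set (cols M). isunit (dim_row M) v"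
    using assms(1) unfolding unitcols_def by (auto simp: in_set_conv_nth)
  have P: "(\<forall>v\<in>set K. isunit (dim_row M) v) \<and> distinct K \<and> length as = dim_col M \<and>
   (\<forall>l<dim_col M. fst (as!l) < length K \<and> snd (as!l) = 1)"
    using depar_cols_prop[OF _ _ cu r] by auto
  have N: "N = mat_of_cols (dim_row M) K"
   and T: "T = mat (length K) (dim_col M) (\<lambda>(i, j). if fst (as ! j) = i then snd (as ! j) else 0)"
    using assms(2) r unfolding depar_def by auto
  have orth: "orthonormal_cols N"
    unfolding orthonormal_cols_def
  proof (intro allI impI)
    fix i j assume i: "i < dim_col N" and j: "j < dim_col N"
    then have i': "i < length K" and j': "j < length K" using N by auto
    obtain a where a: "a < dim_row M" "K ! i = unit_vec (dim_row M) a"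
      using P i' nth_mem unfolding isunit_def by blast
    obtain b where b: "b < dim_row M" "K ! j = unit_vec (dim_row M) b"
      using P j' nth_mem unfolding isunit_def by blast
    have ci: "col N i = unit_vec (dim_row M) a" using N i' a by simp
    have cj: "col N j = unit_vec (dim_row M) b" using N j' b by simp
    have e1: "(K ! i = K ! j) = (i = j)" using P i' j' nth_eq_iff_index_eq by blast
    have e2: "(unit_vec (dim_row M) a = (unit_vec (dim_row M) b :: real vec)) = (a = b)"
    proof
      assume "unit_vec (dim_row M) a = (unit_vec (dim_row M) b :: real vec)"
      then have "unit_vec (dim_row M) a $ a = (unit_vec (dim_row M) b :: real vec) $ a" by simp
      then show "a = b" using a b by (simp split: if_splits)
    qed simp
    have "(a = b) = (i = j)" using e1 e2 a b by simp
    then show "col N i \<bullet> col N j = (if i = j then 1 else 0)"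
      unfolding ci cj using a b by (auto simp: unit_vec_carrier)
  qed
  show ?thesis
  proof (intro conjI orth)
    show "\<forall>l<dim_col M. \<exists>g<dim_row T. \<forall>x<dim_row T. T $$ (x, l) = (if x = g then 1 else 0)"
      using P unfolding T by auto
  qed (auto simp: N T)
qed

definition mid_core :: "nat \<Rightarrow> nat \<Rightarrow> (nat \<Rightarrow> nat) \<Rightarrow> core" where
  "mid_core R n h = (R, n, R, \<lambda>a i b. if a < R \<and> i < n \<and> b < R then
      (if a = b then (if i = h a then 1 else 0) else 0) else 0)"

definition sel_mat :: "real mat \<Rightarrow> nat \<Rightarrow> bool" where
  "sel_mat T R \<longleftrightarrow> dim_col T = R \<and>
     (\<forall>l<R. \<exists>g<dim_row T. \<forall>x<dim_row T. T $$ (x, l) = (if x = g then 1 else 0))"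

lemma slice_mult:
  assumes "x < dim_row T" "i < n" "l < R" "dim_col T = R"
  shows "(T * core_slice (mid_core R n h) i) $$ (x, l) = T $$ (x, l) * (if i = h l then 1 else 0)"
proof -
  have "(T * core_slice (mid_core R n h) i) $$ (x, l) =
     (\<Sum>a\<in>{0..<R}. T $$ (x, a) * (if a = l then (if i = h a then 1 else 0) else 0))"
    using assms by (auto simp: mid_core_def scalar_prod_def intro!: sum.cong)
  also have "\<dots> = (\<Sum>a\<in>{0..<R}. if a = l then T $$ (x, l) * (if i = h l then 1 else 0) else 0)"
    by (rule sum.cong) auto
  also have "\<dots> = T $$ (x, l) * (if i = h l then 1 else 0)" using assms by simp
  finally show ?thesis .
qed

lemma mult_slice:
  assumes "x < R" "i < n" "y < dim_row T" "dim_col T = R"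
  shows "(core_slice (mid_core R n h) i * transpose_mat T) $$ (x, y) = T $$ (y, x) * (if i = h x then 1 else 0)"
proof -
  have "(core_slice (mid_core R n h) i * transpose_mat T) $$ (x, y) =
     (\<Sum>a\<in>{0..<R}. (if x = a then (if i = h x then 1 else 0) else 0) * T $$ (y, a))"
    using assms by (auto simp: mid_core_def scalar_prod_def intro!: sum.cong)
  also have "\<dots> = (\<Sum>a\<in>{0..<R}. if a = x then T $$ (y, x) * (if i = h x then 1 else 0) else 0)"
    by (rule sum.cong) auto
  also have "\<dots> = T $$ (y, x) * (if i = h x then 1 else 0)" using assms by simp
  finally show ?thesis .
qed

lemma lt_mult_aux: "(g::nat) < b \<Longrightarrow> i < n \<Longrightarrow> g * n + i < b * n"
proof -
  assume "g < b" "i < n"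
  then have "g * n + i < g * n + n" by simp
  also have "\<dots> = Suc g * n" by simp
  also have "\<dots> \<le> b * n" using \<open>g < b\<close> by (intro mult_right_mono) auto
  finally show ?thesis .
qed

lemma divmod_eq_aux: "i < (n::nat) \<Longrightarrow> h < n \<Longrightarrow> (r div n = g \<and> r mod n = h) = (r = g * n + h)"
proof
  assume "r div n = g \<and> r mod n = h"
  then show "r = g * n + h" by (metis div_mult_mod_eq)
next
  assume "r = g * n + h" "i < n" "h < n"
  then show "r div n = g \<and> r mod n = h" by simp
qed

lemma lmult_unit:
  assumes "sel_mat T R" "\<forall>l<R. h l < n"
  shows "unitcols (core_L (core_lmult T (mid_core R n h))) \<and> fst (snd (snd (core_lmult T (mid_core R n h)))) = R"
proof -
  have cl: "core_L (core_lmult T (mid_core R n h)) = mat (dim_row T * n) R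
     (\<lambda>(r, l). (T * core_slice (mid_core R n h) (r mod n)) $$ (r div n, l))"
    by (simp add: mid_core_def)
  have "unitcols (core_L (core_lmult T (mid_core R n h)))"
    unfolding unitcols_def isunit_def
  proof (intro allI impI)
    fix l assume "l < dim_col (core_L (core_lmult T (mid_core R n h)))"
    then have l: "l < R" by (simp add: cl)
    obtain g where g: "g < dim_row T" "\<forall>x<dim_row T. T $$ (x, l) = (if x = g then 1 else 0)"
      using assms(1) l unfolding sel_mat_def by blast
    have hl: "h l < n" using assms(2) l by auto
    have "col (core_L (core_lmult T (mid_core R n h))) l = unit_vec (dim_row T * n) (g * n + h l)"
    proof (rule eq_vecI)
      fix r assume "r < dim_vec (unit_vec (dim_row T * n) (g * n + h l) :: real vec)"
      then have r: "r < dim_row T * n" by simp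
      then have n: "0 < n" by (cases n) auto
      have rd: "r div n < dim_row T" using r by (simp add: less_mult_imp_div_less)
      have rm: "r mod n < n" using n by simp
      have "col (core_L (core_lmult T (mid_core R n h))) l $ r =
        T $$ (r div n, l) * (if r mod n = h l then 1 else 0)"
        using r l rd rm slice_mult[OF rd rm l] assms(1) by (simp add: cl sel_mat_def)
      also have "\<dots> = (if r div n = g \<and> r mod n = h l then 1 else 0)" using g rd by simp
      also have "\<dots> = (if r = g * n + h l then 1 else 0)" using divmod_eq_aux[OF rm hl] by simp
      also have "\<dots> = unit_vec (dim_row T * n) (g * n + h l) $ r"
        using r lt_mult_aux[OF g(1) hl] by simp
      finally show "col (core_L (core_lmult T (mid_core R n h))) l $ r = unit_vec (dim_row T * n) (g * n + h l) $ r" .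
    qed (simp add: cl)
    then show "\<exists>j<dim_row (core_L (core_lmult T (mid_core R n h))).
          col (core_L (core_lmult T (mid_core R n h))) l = unit_vec (dim_row (core_L (core_lmult T (mid_core R n h)))) j"
      using lt_mult_aux[OF g(1) hl] by (auto simp: cl)
  qed
  then show ?thesis by (simp add: mid_core_def)
qed

lemma rmult_unit:
  assumes "sel_mat T R" "\<forall>l<R. h l < n"
  shows "unitcols (transpose_mat (core_R (core_rmult (mid_core R n h) (transpose_mat T)))) \<and>
     fst (core_rmult (mid_core R n h) (transpose_mat T)) = R"
proof -
  let ?b = "dim_row T"
  have cl: "transpose_mat (core_R (core_rmult (mid_core R n h) (transpose_mat T))) =
     transpose_mat (mat R (n * ?b)
     (\<lambda>(x, c). (core_slice (mid_core R n h) (c div ?b) * transpose_mat T) $$ (x, c mod ?b)))"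
    by (simp add: mid_core_def)
  have "unitcols (transpose_mat (core_R (core_rmult (mid_core R n h) (transpose_mat T))))"
    unfolding unitcols_def isunit_def
  proof (intro allI impI)
    fix l assume "l < dim_col (transpose_mat (core_R (core_rmult (mid_core R n h) (transpose_mat T))))"
    then have l: "l < R" by (simp add: cl)
    obtain g where g: "g < ?b" "\<forall>x<?b. T $$ (x, l) = (if x = g then 1 else 0)"
      using assms(1) l unfolding sel_mat_def by blast
    have hl: "h l < n" using assms(2) l by auto
    have "col (transpose_mat (core_R (core_rmult (mid_core R n h) (transpose_mat T)))) l = unit_vec (n * ?b) (h l * ?b + g)"
    proof (rule eq_vecI)
      fix r assume "r < dim_vec (unit_vec (n * ?b) (h l * ?b + g) :: real vec)"
      then have r: "r < n * ?b" by simp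
      then have n: "0 < ?b" by (cases ?b) auto
      have rd: "r div ?b < n" using r by (simp add: less_mult_imp_div_less mult.commute)
      have rm: "r mod ?b < ?b" using n by simp
      have "col (transpose_mat (core_R (core_rmult (mid_core R n h) (transpose_mat T)))) l $ r =
        T $$ (r mod ?b, l) * (if r div ?b = h l then 1 else 0)"
        using r l rd rm mult_slice[OF l rd rm] assms(1) by (simp add: cl sel_mat_def)
      also have "\<dots> = (if r div ?b = h l \<and> r mod ?b = g then 1 else 0)" using g rm by simp
      also have "\<dots> = (if r = h l * ?b + g then 1 else 0)" using divmod_eq_aux[OF rm g(1)] by simp
      also have "\<dots> = unit_vec (n * ?b) (h l * ?b + g) $ r"
        using r lt_mult_aux[OF hl g(1)] by (simp add: mult.commute)
      finally show "col (transpose_mat (core_R (core_rmult (mid_core R n h) (transpose_mat T)))) l $ r = unit_vec (n * ?b) (h l * ?b + g) $ r" .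
    qed (simp add: cl)
    then show "\<exists>j<dim_row (transpose_mat (core_R (core_rmult (mid_core R n h) (transpose_mat T)))).
          col (transpose_mat (core_R (core_rmult (mid_core R n h) (transpose_mat T)))) l = unit_vec (dim_row (transpose_mat (core_R (core_rmult (mid_core R n h) (transpose_mat T))))) j"
      using lt_mult_aux[OF hl g(1)] by (auto simp: cl mult.commute)
  qed
  then show ?thesis by (simp add: mid_core_def)
qed

lemma L_of_L: "dim_row N = a * n \<Longrightarrow> core_L (core_of_L a n N) = N"
  by (rule eq_matI) (auto simp: core_of_L_def)

lemma R_of_R: "dim_row N = n * b \<Longrightarrow> transpose_mat (core_R (core_of_R n b (transpose_mat N))) = N"
  by (rule eq_matI) (auto simp: core_of_R_def)

context
  fixes ns :: "nat list" and A :: "nat list \<Rightarrow> real" and p :: nat and fs :: "nat list list"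
  assumes d2: "length ns \<ge> 2" and pd: "p < length ns" and en: "nonzero_fiber_enum ns A p fs"
begin

lemma fs_bound: "j < length fs \<Longrightarrow> k < length ns \<Longrightarrow> k \<noteq> p \<Longrightarrow> fs ! j ! k < ns ! k"
proof -
  assume "j < length fs" "k < length ns" "k \<noteq> p"
  then have "fs ! j \<in> set fs" by simp
  then show ?thesis using en \<open>k < length ns\<close> \<open>k \<noteq> p\<close> unfolding nonzero_fiber_enum_def by auto
qed

lemma init_mid: "0 < k \<Longrightarrow> k < length ns - 1 \<Longrightarrow> k \<noteq> p \<Longrightarrow>
   init_core ns A p fs k = mid_core (length fs) (ns ! k) (\<lambda>a. fs ! a ! k)"
  by (auto simp: init_core_def mid_core_def Let_def fun_eq_iff)

lemma init_first: "0 \<noteq> p \<Longrightarrow>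
  unitcols (core_L (init_core ns A p fs 0)) \<and> fst (snd (snd (init_core ns A p fs 0))) = length fs"
proof -
  assume p0: "0 \<noteq> p"
  let ?n = "ns ! 0"
  have e: "init_core ns A p fs 0 = (1, ?n, length fs, \<lambda>a i b. if a < 1 \<and> i < ?n \<and> b < length fs then
     (if i = fs ! b ! 0 then 1 else 0) else 0)"
    using d2 p0 by (auto simp: init_core_def Let_def fun_eq_iff)
  have "unitcols (core_L (init_core ns A p fs 0))"
    unfolding unitcols_def isunit_def
  proof (intro allI impI)
    fix l assume "l < dim_col (core_L (init_core ns A p fs 0))"
    then have l: "l < length fs" by (simp add: e)
    have "0 < length ns" using d2 by linarith
    then have b: "fs ! l ! 0 < ?n" using fs_bound[OF l _ p0] by auto
    have "col (core_L (init_core ns A p fs 0)) l = unit_vec ?n (fs ! l ! 0)"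
      by (rule eq_vecI) (use l b in \<open>auto simp: e\<close>)
    then show "\<exists>j<dim_row (core_L (init_core ns A p fs 0)). col (core_L (init_core ns A p fs 0)) l =
        unit_vec (dim_row (core_L (init_core ns A p fs 0))) j" using b by (auto simp: e)
  qed
  then show ?thesis by (simp add: e)
qed

lemma init_last: "length ns - 1 \<noteq> p \<Longrightarrow>
  unitcols (transpose_mat (core_R (init_core ns A p fs (length ns - 1)))) \<and>
  fst (init_core ns A p fs (length ns - 1)) = length fs"
proof -
  assume p0': "length ns - 1 \<noteq> p"
  define k where "k = length ns - 1"
  have p0: "k \<noteq> p" using p0' k_def by simp
  let ?k = k
  let ?n = "ns ! ?k"
  have e: "init_core ns A p fs ?k = (length fs, ?n, 1, \<lambda>a i b. if a < length fs \<and> i < ?n \<and> b < 1 then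
     (if i = fs ! a ! ?k then 1 else 0) else 0)"
    using d2 p0 by (auto simp: init_core_def Let_def fun_eq_iff k_def)
  have "unitcols (transpose_mat (core_R (init_core ns A p fs ?k)))"
    unfolding unitcols_def isunit_def
  proof (intro allI impI)
    fix l assume "l < dim_col (transpose_mat (core_R (init_core ns A p fs ?k)))"
    then have l: "l < length fs" by (simp add: e)
    have "k < length ns" using d2 k_def by simp
    then have b: "fs ! l ! ?k < ?n" using fs_bound[OF l _ p0] by auto
    have "col (transpose_mat (core_R (init_core ns A p fs ?k))) l = unit_vec ?n (fs ! l ! ?k)"
      by (rule eq_vecI) (use l b in \<open>auto simp: e\<close>)
    then show "\<exists>j<dim_row (transpose_mat (core_R (init_core ns A p fs ?k))). col (transpose_mat (core_R (init_core ns A p fs ?k))) l =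
        unit_vec (dim_row (transpose_mat (core_R (init_core ns A p fs ?k)))) j" using b by (auto simp: e)
  qed
  then have "unitcols (transpose_mat (core_R (init_core ns A p fs k))) \<and>
    fst (init_core ns A p fs k) = length fs" by (simp add: e)
  then show ?thesis unfolding k_def .
qed


definition Pinv :: "nat \<Rightarrow> core list \<Rightarrow> bool" where
  "Pinv k Gs \<longleftrightarrow> length Gs = length ns \<and> (\<forall>j<k. orthonormal_cols (core_L (Gs ! j))) \<and>
     (k < p \<longrightarrow> unitcols (core_L (Gs ! k)) \<and> fst (snd (snd (Gs ! k))) = length fs) \<and>
     (\<forall>j. k < j \<and> j < length ns \<longrightarrow> Gs ! j = init_core ns A p fs j)"

lemma left_step_inv:
  assumes k: "k < p" and P: "Pinv k Gs"
  shows "Pinv (Suc k) (left_step k Gs)"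
proof -
  obtain a n b f where Gk: "Gs ! k = (a, n, b, f)" by (cases "Gs ! k") auto
  obtain N T where dp: "depar (core_L (a, n, b, f)) = (N, T)" by fastforce
  have ls: "left_step k Gs = Gs[k := core_of_L a n N, Suc k := core_lmult T (Gs ! Suc k)]"
    by (simp add: left_step_def Gk dp del: core_L.simps)
  have uc: "unitcols (core_L (a, n, b, f))" and bR: "b = length fs"
    using P k Gk unfolding Pinv_def by auto
  have D: "orthonormal_cols N \<and> dim_row N = a * n \<and> dim_row T = dim_col N \<and> dim_col T = b \<and>
    (\<forall>l<b. \<exists>g<dim_row T. \<forall>x<dim_row T. T $$ (x, l) = (if x = g then 1 else 0))"
    using depar_prop[OF uc dp] unfolding core_L.simps dim_row_mat dim_col_mat .
  have sel: "sel_mat T (length fs)" using D bR unfolding sel_mat_def by metis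
  have len: "length Gs = length ns" using P unfolding Pinv_def by simp
  have sk: "Suc k < length ns" using k pd by simp
  have nxt: "Gs ! Suc k = init_core ns A p fs (Suc k)" using P sk unfolding Pinv_def by auto
  show ?thesis unfolding Pinv_def
  proof (intro conjI allI impI)
    show "length (left_step k Gs) = length ns" using ls len by simp
  next
    fix j assume j: "j < Suc k"
    show "orthonormal_cols (core_L (left_step k Gs ! j))"
    proof (cases "j = k")
      case True
      then show ?thesis using ls len sk L_of_L[of N a n] D by simp
    next
      case False
      then have "j < k" using j by simp
      then show ?thesis using ls P unfolding Pinv_def by simp
    qed
  next
    assume sk': "Suc k < p"
    have mid: "init_core ns A p fs (Suc k) = mid_core (length fs) (ns ! Suc k) (\<lambda>a. fs ! a ! Suc k)"
      using init_mid sk' pd by simp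
    have bd: "\<forall>l<length fs. fs ! l ! Suc k < ns ! Suc k" using fs_bound sk sk' by simp
    have e: "left_step k Gs ! Suc k = core_lmult T (mid_core (length fs) (ns ! Suc k) (\<lambda>a. fs ! a ! Suc k))"
      using ls len sk nxt mid by simp
    show "unitcols (core_L (left_step k Gs ! Suc k))" "fst (snd (snd (left_step k Gs ! Suc k))) = length fs"
      unfolding e using lmult_unit[OF sel bd] by auto
  next
    fix j assume "Suc k < j \<and> j < length ns"
    then show "left_step k Gs ! j = init_core ns A p fs j" using ls P unfolding Pinv_def by simp
  qed
qed


definition Qinv :: "core list \<Rightarrow> nat \<Rightarrow> core list \<Rightarrow> bool" where
  "Qinv Lf k Gs \<longleftrightarrow> length Gs = length ns \<and> (\<forall>j<k. Gs ! j = Lf ! j) \<and>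
     (p < k \<longrightarrow> unitcols (transpose_mat (core_R (Gs ! k))) \<and> fst (Gs ! k) = length fs) \<and>
     (\<forall>j. k < j \<and> j < length ns \<longrightarrow> orthonormal_cols (transpose_mat (core_R (Gs ! j))))"

lemma right_step_inv:
  assumes k: "p < k" "k < length ns" and Lf: "\<forall>j. p < j \<and> j < length ns \<longrightarrow> Lf ! j = init_core ns A p fs j"
    and Q: "Qinv Lf k Gs"
  shows "Qinv Lf (k - 1) (right_step k Gs)"
proof -
  obtain a n b f where Gk: "Gs ! k = (a, n, b, f)" by (cases "Gs ! k") auto
  obtain N T where dp: "depar (transpose_mat (core_R (a, n, b, f))) = (N, T)" by fastforce
  have rs: "right_step k Gs = Gs[k := core_of_R n b (transpose_mat N), k - 1 := core_rmult (Gs ! (k - 1)) (transpose_mat T)]"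
    by (simp add: right_step_def Gk dp del: core_R.simps)
  have uc: "unitcols (transpose_mat (core_R (a, n, b, f)))" and aR: "a = length fs"
    using Q k Gk unfolding Qinv_def by auto
  have D: "orthonormal_cols N \<and> dim_row N = n * b \<and> dim_row T = dim_col N \<and> dim_col T = a \<and>
    (\<forall>l<a. \<exists>g<dim_row T. \<forall>x<dim_row T. T $$ (x, l) = (if x = g then 1 else 0))"
    using depar_prop[OF uc dp] unfolding core_R.simps dim_row_mat dim_col_mat index_transpose_mat .
  have sel: "sel_mat T (length fs)" using D aR unfolding sel_mat_def by metis
  have len: "length Gs = length ns" using Q unfolding Qinv_def by simp
  have km: "k - 1 < k" using k by simp
  have prv: "Gs ! (k - 1) = Lf ! (k - 1)" using Q km unfolding Qinv_def by auto
  show ?thesis unfolding Qinv_def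
  proof (intro conjI allI impI)
    show "length (right_step k Gs) = length ns" using rs len by simp
  next
    fix j assume j: "j < k - 1"
    then show "right_step k Gs ! j = Lf ! j" using rs Q unfolding Qinv_def by simp
  next
    assume pk: "p < k - 1"
    have mid: "init_core ns A p fs (k - 1) = mid_core (length fs) (ns ! (k - 1)) (\<lambda>a. fs ! a ! (k - 1))"
      using init_mid pk k by simp
    have bd: "\<forall>l<length fs. fs ! l ! (k - 1) < ns ! (k - 1)" using fs_bound k pk by simp
    have e: "right_step k Gs ! (k - 1) = core_rmult (mid_core (length fs) (ns ! (k - 1)) (\<lambda>a. fs ! a ! (k - 1))) (transpose_mat T)"
      using rs len k prv Lf pk mid by simp
    show "unitcols (transpose_mat (core_R (right_step k Gs ! (k - 1))))" "fst (right_step k Gs ! (k - 1)) = length fs"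
      unfolding e using rmult_unit[OF sel bd] by auto
  next
    fix j assume j: "k - 1 < j \<and> j < length ns"
    show "orthonormal_cols (transpose_mat (core_R (right_step k Gs ! j)))"
    proof (cases "j = k")
      case True
      then show ?thesis using rs len k R_of_R[of N n b] D by simp
    next
      case False
      then have "k < j" using j k(1) by linarith
      then show ?thesis using rs Q j unfolding Qinv_def by simp
    qed
  qed
qed

lemma left_fold: "k \<le> p \<Longrightarrow> Pinv k (fold left_step [0..<k] (map (init_core ns A p fs) [0..<length ns]))"
proof (induction k)
  case 0
  have "0 < length ns" using pd by linarith
  then have "map (init_core ns A p fs) [0..<length ns] ! 0 = init_core ns A p fs 0" by simp
  then show ?case unfolding Pinv_def using init_first pd by auto
next
  case (Suc k)
  then show ?case using left_step_inv by simp
qed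

lemma right_fold: "p + m < length ns \<Longrightarrow> Qinv Lf (p + m) Gs \<Longrightarrow>
   \<forall>j. p < j \<and> j < length ns \<longrightarrow> Lf ! j = init_core ns A p fs j \<Longrightarrow>
   Qinv Lf p (fold right_step (rev [Suc p..<Suc (p + m)]) Gs)"
proof (induction m arbitrary: Gs)
  case 0
  then show ?case by simp
next
  case (Suc m)
  have "Qinv Lf (p + m) (right_step (Suc (p + m)) Gs)"
    using right_step_inv[of "Suc (p + m)" Lf Gs] Suc.prems by simp
  then have "Qinv Lf p (fold right_step (rev [Suc p..<Suc (p + m)]) (right_step (Suc (p + m)) Gs))"
    using Suc by simp
  then show ?case by simp
qed

lemma main_result:
  "(\<forall>k<p. orthonormal_cols (core_L (sparse_tt ns A p fs ! k))) \<and>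
   (\<forall>k. p < k \<and> k < length ns \<longrightarrow> orthonormal_cols (transpose_mat (core_R (sparse_tt ns A p fs ! k))))"
proof -
  define Lf where "Lf = fold left_step [0..<p] (map (init_core ns A p fs) [0..<length ns])"
  have P: "Pinv p Lf" using left_fold[of p] Lf_def by simp
  have Lfi: "\<forall>j. p < j \<and> j < length ns \<longrightarrow> Lf ! j = init_core ns A p fs j" using P unfolding Pinv_def by auto
  define m where "m = length ns - 1 - p"
  have pm: "p + m = length ns - 1" "Suc (p + m) = length ns" using pd m_def by auto
  have Q0: "Qinv Lf (p + m) Lf"
    unfolding Qinv_def
  proof (intro conjI allI impI)
    show "length Lf = length ns" using P unfolding Pinv_def by simp
  next
    assume "p < p + m"
    then have "length ns - 1 \<noteq> p" "p < length ns - 1" using pm by auto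
    then show "unitcols (transpose_mat (core_R (Lf ! (p + m))))" "fst (Lf ! (p + m)) = length fs"
      using init_last Lfi pm by auto
  next
    fix j assume "p + m < j \<and> j < length ns" then show "orthonormal_cols (transpose_mat (core_R (Lf ! j)))"
      using pm by simp
  qed simp
  have st: "sparse_tt ns A p fs = fold right_step (rev [Suc p..<Suc (p + m)]) Lf"
    by (simp only: sparse_tt_def Lf_def pm(2))
  have Q: "Qinv Lf p (sparse_tt ns A p fs)"
    unfolding st by (rule right_fold[OF _ Q0 Lfi]) (use pm in simp)
  show ?thesis
  proof (intro conjI allI impI)
    fix k assume "k < p"
    then show "orthonormal_cols (core_L (sparse_tt ns A p fs ! k))" using P Q unfolding Pinv_def Qinv_def by simp
  next
    fix k assume "p < k \<and> k < length ns"
    then show "orthonormal_cols (transpose_mat (core_R (sparse_tt ns A p fs ! k)))" using Q unfolding Qinv_def by simp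
  qed
qed

end

theorem corollary2:
  fixes ns :: "nat list" and A :: "nat list \<Rightarrow> real" and p :: nat and fs :: "nat list list"
  assumes "length ns \<ge> 2" and "p < length ns" and "nonzero_fiber_enum ns A p fs"
  shows "(\<forall>k<p. orthonormal_cols (core_L (sparse_tt ns A p fs ! k))) \<and>
         (\<forall>k. p < k \<and> k < length ns \<longrightarrow>
              orthonormal_cols (transpose_mat (core_R (sparse_tt ns A p fs ! k))))"
  using main_result[OF assms] .

end
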